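(* Consider the problem $\min f(x)$ subject to $g(x)\in\mathcal K$, $x\in\mathcal M$. Let $x^*$ be a feasible point with $M(x^* )\neq\emptyset$ and let $y^*\in M(x^* )$. Then $M(x^* )$ is a singleton if and only if $$\left[Dg(x^* )T_{x^*}\mathcal M\right]^{\perp}\cap\mathcal R_{\mathcal N_{\mathcal K}(g(x^* ))}(y^* )=\{0\}.$$
   Context: $\mathcal M$ is a smooth Riemannian manifold with Riemannian gradient $\operatorname{grad}$; $\mathbb Y$ is a Euclidean space; $f:\mathcal M\to\mathbb R$, $g:\mathcal M\to\mathbb Y$ are twice continuously differentiable; $\mathcal K\subset\mathbb Y$ is a nonempty closed convex set. $Dg(x)$ is the differential of $g$ at $x$, $\mathcal N_{\mathcal K}(u)$ the normal cone of $\mathcal K$ at $u$. The Lagrangian is $L(x;y)=f(x)+\langle y,g(x)\rangle$ and $M(x)=\{y\in\mathbb Y:\operatorname{grad}_xL(x;y)=0,\ y\in\mathcal N_{\mathcal K}(g(x))\}$. For a closed set $\mathcal D$ and $u\in\mathcal D$, the radial cone is $\mathcal R_{\mathcal D}(u)=\{d:\exists t^*>0 \text{ with } u+td\in\mathcal D\ \forall t\in[0,t^*]\}$. Feasible means $g(x^* )\in\mathcal K$. *)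

theory Defs
  imports "HOL-Analysis.Analysis"
begin

definition normal_cone :: "'y::real_inner set \<Rightarrow> 'y \<Rightarrow> 'y set" where
  "normal_cone K u = {y. \<forall>k\<in>K. inner y (k - u) \<le> 0}"

definition radial_cone :: "'y::real_vector set \<Rightarrow> 'y \<Rightarrow> 'y set" where
  "radial_cone D u = {d. \<exists>ts>0. \<forall>t\<in>{0..ts}. u + t *\<^sub>R d \<in> D}"

text \<open>Riemannian gradient at a point: the tangent space T at the point is a linear
  subspace of a Euclidean space carrying the Riemannian metric as its inner product;
  for a function with differential phi (a linear functional on T) at that point,
  the gradient is the unique vector w in T with inner w v = phi v for all v in T.\<close>
definition rgrad :: "'a::euclidean_space set \<Rightarrow> ('a \<Rightarrow> real) \<Rightarrow> 'a" where
  "rgrad T phi = (THE w. w \<in> T \<and> (\<forall>v\<in>T. inner w v = phi v))"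

text \<open>Lagrange multiplier set M(x) at a point x, given the tangent space T of the manifold
  at x, the differential Df of f at x, the differential Dg of g at x and the value gx = g x:
  the Lagrangian L(x;y) = f x + inner y (g x) has differential v \<mapsto> Df v + inner y (Dg v).\<close>
definition multiplier_set ::
  "'a::euclidean_space set \<Rightarrow> ('a \<Rightarrow> real) \<Rightarrow> ('a \<Rightarrow> 'y::euclidean_space) \<Rightarrow> 'y set \<Rightarrow> 'y \<Rightarrow> 'y set" where
  "multiplier_set T Df Dg K gx =
     {y. rgrad T (\<lambda>v. Df v + inner y (Dg v)) = 0 \<and> y \<in> normal_cone K gx}"

end

theory Submission
  imports Defs
begin

lemma rgrad_zero_iff:
  fixes T :: "'a::euclidean_space set" and phi :: "'a \<Rightarrow> real"
  assumes T: "subspace T" and L: "linear phi"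
  shows "rgrad T phi = 0 \<longleftrightarrow> (\<forall>v\<in>T. phi v = 0)"
proof -
  have uniq: "\<And>w1 w2. w1 \<in> T \<Longrightarrow> (\<forall>v\<in>T. inner w1 v = phi v) \<Longrightarrow>
      w2 \<in> T \<Longrightarrow> (\<forall>v\<in>T. inner w2 v = phi v) \<Longrightarrow> w1 = w2"
  proof -
    fix w1 w2 assume a: "w1 \<in> T" "\<forall>v\<in>T. inner w1 v = phi v" "w2 \<in> T" "\<forall>v\<in>T. inner w2 v = phi v"
    have d: "w1 - w2 \<in> T" using a T by (simp add: subspace_diff)
    have "inner (w1 - w2) (w1 - w2) = 0"
      using a d by (simp add: inner_diff_left)
    then show "w1 = w2" by simp
  qed
  define r where "r = adjoint phi 1"
  have r: "phi v = inner r v" for v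
    using adjoint_works[OF L, of v "1::real"] unfolding r_def by (simp add: inner_commute)
  obtain p q where p: "p \<in> span T" and q: "\<And>w. w \<in> span T \<Longrightarrow> orthogonal q w" and rpq: "r = p + q"
    using orthogonal_subspace_decomp_exists by blast
  have pT: "p \<in> T" using p T span_minimal[of T T] by blast
  have pr: "\<forall>v\<in>T. inner p v = phi v"
  proof
    fix v assume "v \<in> T"
    then have "inner q v = 0" using q[of v] by (simp add: span_base orthogonal_def)
    then show "inner p v = phi v" using r[of v] rpq by (simp add: inner_add_left)
  qed
  have rg: "rgrad T phi = p"
    unfolding rgrad_def using pT pr uniq by (intro the_equality) auto
  show ?thesis
  proof
    assume "rgrad T phi = 0"
    then show "\<forall>v\<in>T. phi v = 0" using rg pr by simp
  next
    assume h: "\<forall>v\<in>T. phi v = 0"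
    have "p = 0" using uniq[OF pT pr, of 0] h T by (simp add: subspace_0)
    then show "rgrad T phi = 0" using rg by simp
  qed
qed

lemma normal_cone_convex:
  assumes "y1 \<in> normal_cone K u" "y2 \<in> normal_cone K u" "0 \<le> t" "t \<le> 1"
  shows "y1 + t *\<^sub>R (y2 - y1) \<in> normal_cone K u"
proof -
  have "\<forall>k\<in>K. inner (y1 + t *\<^sub>R (y2 - y1)) (k - u) \<le> 0"
  proof
    fix k assume k: "k \<in> K"
    have a: "inner y1 (k - u) \<le> 0" "inner y2 (k - u) \<le> 0"
      using assms k unfolding normal_cone_def by auto
    have "inner (y1 + t *\<^sub>R (y2 - y1)) (k - u) = (1 - t) * inner y1 (k - u) + t * inner y2 (k - u)"
      by (simp add: inner_add_left inner_diff_left algebra_simps)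
    also have "\<dots> \<le> 0" using a assms(3,4)
      by (simp add: add_nonpos_nonpos mult_nonneg_nonpos)
    finally show "inner (y1 + t *\<^sub>R (y2 - y1)) (k - u) \<le> 0" .
  qed
  then show ?thesis unfolding normal_cone_def by simp
qed

theorem proposition2:
  fixes T :: "'a::euclidean_space set"
    and Df :: "'a \<Rightarrow> real"
    and Dg :: "'a \<Rightarrow> 'y::euclidean_space"
    and K :: "'y set"
    and gx ystar :: 'y
  assumes "subspace T"
    and "linear Df"
    and "linear Dg"
    and "K \<noteq> {}" and "closed K" and "convex K"
    and "gx \<in> K"
    and "multiplier_set T Df Dg K gx \<noteq> {}"
    and "ystar \<in> multiplier_set T Df Dg K gx"
  shows "is_singleton (multiplier_set T Df Dg K gx) \<longleftrightarrow>
         orthogonal_comp (Dg ` T) \<inter> radial_cone (normal_cone K gx) ystar = {0}"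
proof -
  let ?M = "multiplier_set T Df Dg K gx"
  let ?N = "normal_cone K gx"
  have lin: "\<And>y. linear (\<lambda>v. Df v + inner y (Dg v))"
    using assms(2,3) by (intro linear_compose_add linear_compose[of Dg "inner _", unfolded o_def]
        bounded_linear.linear[OF bounded_linear_inner_right]) auto
  have Mchar: "\<And>y. y \<in> ?M \<longleftrightarrow> y \<in> ?N \<and> (\<forall>v\<in>T. Df v + inner y (Dg v) = 0)"
    unfolding multiplier_set_def using rgrad_zero_iff[OF assms(1) lin] by auto
  have ys: "ystar \<in> ?N" "\<forall>v\<in>T. Df v + inner ystar (Dg v) = 0"
    using Mchar assms(9) by auto
  have Mshift: "\<And>y. y \<in> ?M \<longleftrightarrow> y \<in> ?N \<and> y - ystar \<in> orthogonal_comp (Dg ` T)"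
  proof -
    fix y
    have "(\<forall>v\<in>T. Df v + inner y (Dg v) = 0) \<longleftrightarrow> (\<forall>v\<in>T. inner (Dg v) (y - ystar) = 0)"
      using ys(2) by (auto simp: inner_diff_right inner_commute) (metis add_diff_cancel_left' diff_0)+
    then show "y \<in> ?M \<longleftrightarrow> y \<in> ?N \<and> y - ystar \<in> orthogonal_comp (Dg ` T)"
      using Mchar by (auto simp: orthogonal_comp_def orthogonal_def)
  qed
  have sing: "is_singleton ?M \<longleftrightarrow> (\<forall>y\<in>?M. y = ystar)"
    using assms(9) unfolding is_singleton_def by (metis singletonD singleton_iff subsetI subset_singleton_iff empty_iff)
  have zero: "0 \<in> orthogonal_comp (Dg ` T) \<inter> radial_cone ?N ystar"
    using ys(1) by (auto simp: orthogonal_comp_def orthogonal_def radial_cone_def intro: exI[of _ 1])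
  show ?thesis
  proof
    assume s: "is_singleton ?M"
    show "orthogonal_comp (Dg ` T) \<inter> radial_cone ?N ystar = {0}"
    proof (rule ccontr)
      assume "orthogonal_comp (Dg ` T) \<inter> radial_cone ?N ystar \<noteq> {0}"
      then obtain d where d: "d \<in> orthogonal_comp (Dg ` T)" "d \<in> radial_cone ?N ystar" "d \<noteq> 0"
        using zero by blast
      obtain ts where ts: "ts > 0" "\<forall>t\<in>{0..ts}. ystar + t *\<^sub>R d \<in> ?N"
        using d(2) unfolding radial_cone_def by blast
      have "ystar + ts *\<^sub>R d \<in> ?N" using ts by auto
      moreover have "(ystar + ts *\<^sub>R d) - ystar \<in> orthogonal_comp (Dg ` T)"
        using d(1) subspace_orthogonal_comp[of "Dg ` T"] by (simp add: subspace_scale)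
      ultimately have "ystar + ts *\<^sub>R d \<in> ?M" using Mshift by blast
      then have "ystar + ts *\<^sub>R d = ystar" using s sing by blast
      then show False using ts d(3) by simp
    qed
  next
    assume h: "orthogonal_comp (Dg ` T) \<inter> radial_cone ?N ystar = {0}"
    have "\<forall>y\<in>?M. y = ystar"
    proof
      fix y assume y: "y \<in> ?M"
      then have yN: "y \<in> ?N" and yo: "y - ystar \<in> orthogonal_comp (Dg ` T)" using Mshift by auto
      have "y - ystar \<in> radial_cone ?N ystar"
        unfolding radial_cone_def
        using normal_cone_convex[OF ys(1) yN] by (intro CollectI exI[of _ "1::real"]) auto
      then have "y - ystar = 0" using h yo by blast
      then show "y = ystar" by simp
    qed
    then show "is_singleton ?M" using sing by blast
  qed
qed

end
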